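(* Let $\varphi,\psi\in G$ satisfy $\lim_{t\to0+}\psi(t)/\varphi(t)=0$, $\delta_\varphi<1$, and $M(\tilde\varphi)\subset\Lambda(\psi)$. Then the identity inclusion operator $I:M(\tilde\varphi)\to\Lambda(\psi)$ is disjointly strictly singular.
   Context: All functions are Lebesgue measurable on $[0,1]$, and $x^*$ denotes the decreasing left-continuous rearrangement of $|x|$. $G$ denotes the class of all positive increasing concave functions on $(0,1]$. For $\psi\in G$, the Lorentz space $\Lambda(\psi)$ consists of all measurable $x$ with $\|x\|_{\Lambda(\psi)}=\int_0^1 x^*(s)\,d\psi(s)<\infty$. For $\varphi\in G$ put $\tilde\varphi(t)=t/\varphi(t)$; the Marcinkiewicz space $M(\tilde\varphi)$ consists of all measurable $x$ with $\|x\|_{M(\tilde\varphi)}=\sup_{0<t\le1}\frac{1}{\tilde\varphi(t)}\int_0^t x^*(s)\,ds<\infty$. For a positive function $f$ on $(0,1]$, its dilation function is $\mathcal M_f(t)=\sup\{f(st)/f(s):0<s\le\min(1,1/t)\}$ for $t>0$, and its upper dilation index is $\delta_f=\lim_{t\to\infty}\ln\mathcal M_f(t)/\ln t$. A bounded linear operator $T$ from a Banach lattice $X$ into a Banach space $Y$ is disjointly strictly singular (DSS) if there is no sequence of nonzero pairwise disjoint elements $x_n\in X$ such that the restriction of $T$ to their closed linear span $[x_n]$ is an isomorphism (onto its image). *)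

theory Defs
  imports "HOL-Analysis.Analysis"
begin

text \<open>Functions on [0,1] are modelled as real \<Rightarrow> real; only their values on [0,1] matter.
  Norms are ennreal-valued (possibly infinite).\<close>

definition meas01 :: "(real \<Rightarrow> real) \<Rightarrow> bool" where
  "meas01 x \<longleftrightarrow> x \<in> borel_measurable (restrict_space lebesgue {0..1})"

definition distr_fun :: "(real \<Rightarrow> real) \<Rightarrow> ennreal \<Rightarrow> ennreal" where
  "distr_fun x r = emeasure lebesgue {s \<in> {0..1}. r < ennreal \<bar>x s\<bar>}"

text \<open>Decreasing left-continuous rearrangement x*(t) = inf{\<lambda>. d_x(\<lambda>) < t} for t > 0;
  at t = 0 it is the essential supremum of |x|.\<close>
definition rearr :: "(real \<Rightarrow> real) \<Rightarrow> real \<Rightarrow> ennreal" where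
  "rearr x t = (if t \<le> 0 then Inf {r. distr_fun x r = 0}
                else Inf {r. distr_fun x r < ennreal t})"

definition classG :: "(real \<Rightarrow> real) \<Rightarrow> bool" where
  "classG f \<longleftrightarrow> (\<forall>t\<in>{0<..1}. f t > 0) \<and> mono_on {0<..1} f \<and> concave_on {0<..1} f"

text \<open>Distribution function on the real line generating the Lebesgue--Stieltjes measure d\<psi>
  on [0,1] (with \<psi>(0) = 0, so that a possible jump \<psi>(0+) gives an atom at 0).\<close>
definition stieltjes_fun :: "(real \<Rightarrow> real) \<Rightarrow> real \<Rightarrow> real" where
  "stieltjes_fun \<psi> t = (if t < 0 then 0
                        else if t = 0 then Lim (at_right 0) \<psi>
                        else if t \<le> 1 then \<psi> t else \<psi> 1)"

definition lorentz_norm :: "(real \<Rightarrow> real) \<Rightarrow> (real \<Rightarrow> real) \<Rightarrow> ennreal" where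
  "lorentz_norm \<psi> x = (\<integral>\<^sup>+ s. rearr x s \<partial>(interval_measure (stieltjes_fun \<psi>)))"

definition in_lorentz :: "(real \<Rightarrow> real) \<Rightarrow> (real \<Rightarrow> real) \<Rightarrow> bool" where
  "in_lorentz \<psi> x \<longleftrightarrow> meas01 x \<and> lorentz_norm \<psi> x < \<infinity>"

definition tilde :: "(real \<Rightarrow> real) \<Rightarrow> real \<Rightarrow> real" where
  "tilde \<phi> t = t / \<phi> t"

definition marc_norm :: "(real \<Rightarrow> real) \<Rightarrow> (real \<Rightarrow> real) \<Rightarrow> ennreal" where
  "marc_norm \<phi> x = (SUP t\<in>{0<..1}. ennreal (1 / tilde \<phi> t) * (\<integral>\<^sup>+ s\<in>{0..t}. rearr x s \<partial>lborel))"

definition in_marc :: "(real \<Rightarrow> real) \<Rightarrow> (real \<Rightarrow> real) \<Rightarrow> bool" where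
  "in_marc \<phi> x \<longleftrightarrow> meas01 x \<and> marc_norm \<phi> x < \<infinity>"

definition dilation :: "(real \<Rightarrow> real) \<Rightarrow> real \<Rightarrow> real" where
  "dilation f t = Sup {f (s * t) / f s | s. 0 < s \<and> s \<le> min 1 (1 / t)}"

definition upper_dil_index :: "(real \<Rightarrow> real) \<Rightarrow> real" where
  "upper_dil_index f = Lim at_top (\<lambda>t. ln (dilation f t) / ln t)"

definition nonzero01 :: "(real \<Rightarrow> real) \<Rightarrow> bool" where
  "nonzero01 x \<longleftrightarrow> emeasure lebesgue {s \<in> {0..1}. x s \<noteq> 0} \<noteq> 0"

definition disjoint01 :: "(real \<Rightarrow> real) \<Rightarrow> (real \<Rightarrow> real) \<Rightarrow> bool" where
  "disjoint01 x y \<longleftrightarrow> emeasure lebesgue {s \<in> {0..1}. x s \<noteq> 0 \<and> y s \<noteq> 0} = 0"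

definition closed_span_marc :: "(real \<Rightarrow> real) \<Rightarrow> (nat \<Rightarrow> real \<Rightarrow> real) \<Rightarrow> (real \<Rightarrow> real) set" where
  "closed_span_marc \<phi> xs = {y. in_marc \<phi> y \<and>
     (\<forall>\<epsilon>>0. \<exists>N (a::nat \<Rightarrow> real).
        marc_norm \<phi> (\<lambda>s. y s - (\<Sum>i<N. a i * xs i s)) < ennreal \<epsilon>)}"

text \<open>The restriction of the inclusion I : M(\<tilde>\<phi>) \<rightarrow> \<Lambda>(\<psi>) to a subspace Z is an isomorphism
  onto its image: (I is bounded and) bounded below on Z.\<close>
definition incl_iso_on :: "(real \<Rightarrow> real) \<Rightarrow> (real \<Rightarrow> real) \<Rightarrow> (real \<Rightarrow> real) set \<Rightarrow> bool" where
  "incl_iso_on \<phi> \<psi> Z \<longleftrightarrow> (\<exists>c>0. \<forall>y\<in>Z. ennreal c * marc_norm \<phi> y \<le> lorentz_norm \<psi> y)"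

definition incl_DSS :: "(real \<Rightarrow> real) \<Rightarrow> (real \<Rightarrow> real) \<Rightarrow> bool" where
  "incl_DSS \<phi> \<psi> \<longleftrightarrow> \<not> (\<exists>xs :: nat \<Rightarrow> real \<Rightarrow> real.
      (\<forall>n. in_marc \<phi> (xs n) \<and> nonzero01 (xs n)) \<and>
      (\<forall>n m. n \<noteq> m \<longrightarrow> disjoint01 (xs n) (xs m)) \<and>
      incl_iso_on \<phi> \<psi> (closed_span_marc \<phi> xs))"

end

theory Submission
  imports Defs
begin


lemma conc_aux:
  assumes G: "classG f" and a: "0 < a" "a < b" "b \<le> 1" and e: "0 < e" "e < a"
  shows "(a - e) * f b \<le> (b - e) * f a"
proof -
  have cc: "concave_on {0<..1} f" and pos: "\<And>t. t \<in> {0<..1} \<Longrightarrow> f t > 0"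
    using G by (auto simp: classG_def)
  define t where "t = (a - e) / (b - e)"
  have t0: "0 \<le> t" "t \<le> 1" using a e by (auto simp: t_def field_simps)
  have "(1 - t) * f e + t * f b \<le> f ((1 - t) *\<^sub>R e + t *\<^sub>R b)"
    by (rule concave_onD[OF cc t0]) (use a e in auto)
  moreover have "(1 - t) *\<^sub>R e + t *\<^sub>R b = a"
  proof -
    have "b - e > 0" using a e by simp
    then have "t * (b - e) = a - e" by (simp add: t_def)
    moreover have "(1 - t) * e + t * b = e + t * (b - e)" by (simp add: algebra_simps)
    ultimately show ?thesis by simp
  qed
  moreover have "(1 - t) * f e \<ge> 0" using t0 pos[of e] a e by auto
  ultimately have "t * f b \<le> f a" by simp
  then show ?thesis using a e by (simp add: t_def field_simps)
qed

lemma conc_ratio: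
  assumes G: "classG f" and a: "0 < a" "a \<le> b" "b \<le> 1"
  shows "a * f b \<le> b * f a"
proof (cases "a = b")
  case True then show ?thesis by simp
next
  case False
  hence ab: "a < b" using a by simp
  have pos: "\<And>t. t \<in> {0<..1} \<Longrightarrow> f t > 0" using G by (auto simp: classG_def)
  have fb: "f b > 0" using pos a by auto
  show ?thesis
  proof (rule ccontr)
    assume nt: "\<not> a * f b \<le> b * f a"
    define d where "d = a * f b - b * f a"
    have d: "d > 0" using nt by (simp add: d_def)
    define e where "e = min (a/2) (d / (2 * f b))"
    have e: "0 < e" "e < a" using d fb a by (auto simp: e_def)
    have "(a - e) * f b \<le> (b - e) * f a" by (rule conc_aux[OF G a(1) ab a(3) e])
    hence "d \<le> e * (f b - f a)" by (simp add: d_def algebra_simps)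
    also have "\<dots> \<le> e * f b" using e pos[of a] a by (auto intro!: mult_left_mono)
    also have "\<dots> \<le> d / (2 * f b) * f b"
      using fb by (intro mult_right_mono) (auto simp: e_def)
    also have "\<dots> = d / 2" using fb by simp
    finally show False using d by simp
  qed
qed



lemma G_pos: "classG f \<Longrightarrow> 0 < t \<Longrightarrow> t \<le> 1 \<Longrightarrow> f t > 0"
  by (auto simp: classG_def)

lemma G_mono: "classG f \<Longrightarrow> 0 < s \<Longrightarrow> s \<le> t \<Longrightarrow> t \<le> 1 \<Longrightarrow> f s \<le> f t"
  unfolding classG_def by (auto intro: mono_onD)

lemma G_ratio_le:
  assumes G: "classG f" and "0 < s" "1 \<le> t" "s * t \<le> 1"
  shows "f (s * t) \<le> t * f s"
proof -
  have "s * f (s * t) \<le> (s * t) * f s"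
    by (rule conc_ratio[OF G]) (use assms in \<open>auto simp: mult_le_cancel_left1\<close>)
  then show ?thesis using assms(2) by (simp add: mult.assoc mult_le_cancel_left_pos)
qed

lemma dil_step:
  assumes G: "classG \<phi>" and idx: "upper_dil_index \<phi> < 1"
  shows "\<exists>t0 Q. 1 < t0 \<and> 1 \<le> Q \<and> Q < t0 \<and> (\<forall>s. 0 < s \<and> s \<le> 1 / t0 \<longrightarrow> \<phi> (s * t0) \<le> Q * \<phi> s)"
proof -
  define D where "D t = {\<phi> (s * t) / \<phi> s | s. 0 < s \<and> s \<le> min 1 (1 / t)}" for t
  have dil: "dilation \<phi> t = Sup (D t)" for t by (simp add: dilation_def D_def)
  have Dne: "D t \<noteq> {}" if "1 < t" for t
  proof -
    have "\<phi> ((1/t) * t) / \<phi> (1/t) \<in> D t" unfolding D_def using that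
      by (intro CollectI exI[of _ "1/t"]) auto
    then show ?thesis by auto
  qed
  have Dle: "y \<le> t" if t1: "1 < t" and yD: "y \<in> D t" for t y
  proof -
    have mn: "min 1 (1/t) = 1/t" using that by simp
    obtain s where s: "0 < s" "s \<le> 1/t" "y = \<phi> (s * t) / \<phi> s"
      using yD unfolding D_def mn by blast
    have st: "s * t \<le> 1" using s that by (simp add: field_simps)
    have "\<phi> (s * t) \<le> t * \<phi> s" by (rule G_ratio_le[OF G]) (use s that st in auto)
    moreover have "\<phi> s > 0"
    proof -
      have "1/t < 1" using t1 by simp
      then show ?thesis using G_pos[OF G, of s] s by linarith
    qed
    ultimately show ?thesis using s by (simp add: divide_le_eq)
  qed
  have Dbdd: "bdd_above (D t)" if "1 < t" for t using Dle[OF that] by (intro bdd_aboveI[of _ t]) auto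
  have dil_le: "dilation \<phi> t \<le> t" if "1 < t" for t
    unfolding dil by (rule cSup_least[OF Dne[OF that]]) (use Dle[OF that] in auto)
  have "\<exists>t0>1. dilation \<phi> t0 < t0"
  proof (rule ccontr)
    assume nt: "\<not> (\<exists>t0>1. dilation \<phi> t0 < t0)"
    have eq: "dilation \<phi> t = t" if "1 < t" for t using nt dil_le[OF that] that by force
    have ev: "eventually (\<lambda>t. ln (dilation \<phi> t) / ln t = 1) at_top"
      using eventually_gt_at_top[of "1::real"] by eventually_elim (simp add: eq)
    have "((\<lambda>t. ln (dilation \<phi> t) / ln t) \<longlongrightarrow> 1) at_top"
      by (rule tendsto_eventually[OF ev])
    then have "upper_dil_index \<phi> = 1"
      unfolding upper_dil_index_def by (intro tendsto_Lim) auto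
    then show False using idx by simp
  qed
  then obtain t0 where t0: "1 < t0" "dilation \<phi> t0 < t0" by blast
  define Q where "Q = dilation \<phi> t0"
  have mem: "\<phi> (s * t0) / \<phi> s \<in> D t0" if "0 < s" "s \<le> 1/t0" for s
    unfolding D_def using that t0 by (auto simp: min_def)
  have upper: "\<phi> (s * t0) / \<phi> s \<le> Q" if "0 < s" "s \<le> 1/t0" for s
    unfolding Q_def dil by (rule cSup_upper[OF mem[OF that] Dbdd[OF t0(1)]])
  have "\<phi> ((1/t0) * t0) / \<phi> (1/t0) \<le> Q" by (rule upper) (use t0 in auto)
  moreover have "\<phi> (1/t0) \<le> \<phi> 1" "\<phi> (1/t0) > 0" using t0 G_mono[OF G, of "1/t0" 1] G_pos[OF G, of "1/t0"]
    by auto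
  ultimately have "1 \<le> \<phi> 1 / \<phi> (1/t0)" by (simp add: le_divide_eq_1_pos)
  then have Q1: "1 \<le> Q" using \<open>\<phi> ((1/t0) * t0) / \<phi> (1/t0) \<le> Q\<close> t0 by simp
  have "\<phi> (s * t0) \<le> Q * \<phi> s" if "0 < s" "s \<le> 1/t0" for s
  proof -
    have "1/t0 < 1" using t0 by simp
    then have "\<phi> s > 0" using G_pos[OF G, of s] that by linarith
    then show ?thesis using upper[OF that] by (simp add: divide_le_eq)
  qed
  then show ?thesis using t0 Q1 unfolding Q_def[symmetric] by blast
qed



lemma pow_n:
  assumes G: "classG \<phi>" and t0: "1 < t0" and Q: "1 \<le> Q"
    and step: "\<forall>s. 0 < s \<and> s \<le> 1 / t0 \<longrightarrow> \<phi> (s * t0) \<le> Q * \<phi> s"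
  shows "0 < s \<Longrightarrow> s \<le> t \<Longrightarrow> t \<le> 1 \<Longrightarrow> t \<le> t0 ^ n * s \<Longrightarrow> \<phi> t \<le> Q ^ n * \<phi> s"
proof (induction n arbitrary: t)
  case 0
  then show ?case by simp
next
  case (Suc n)
  have tt: "\<phi> t \<le> Q * \<phi> (t / t0)"
    using step[rule_format, of "t / t0"] Suc.prems t0 by (auto simp: field_simps)
  have Qn: "1 \<le> Q ^ n" using Q by simp
  have ps: "\<phi> s > 0" using G_pos[OF G, of s] Suc.prems by auto
  show ?case
  proof (cases "t / t0 \<le> s")
    case True
    have "\<phi> (t / t0) \<le> \<phi> s" by (rule G_mono[OF G]) (use True Suc.prems t0 in auto)
    then have "\<phi> t \<le> Q * \<phi> s" using tt Q by (smt (verit) mult_left_mono)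
    also have "\<dots> \<le> Q * (Q ^ n * \<phi> s)" using Qn ps Q
      by (intro mult_left_mono) (auto simp: mult_le_cancel_right1)
    finally show ?thesis by simp
  next
    case False
    have "t / t0 \<le> t0 ^ n * s" using Suc.prems t0 by (simp add: field_simps)
    then have "\<phi> (t / t0) \<le> Q ^ n * \<phi> s"
      using Suc.IH[of "t / t0"] False Suc.prems t0 by (auto simp: field_simps)
    then have "Q * \<phi> (t / t0) \<le> Q * (Q ^ n * \<phi> s)" using Q by (intro mult_left_mono) auto
    then show ?thesis using tt by simp
  qed
qed

lemma pow_bound:
  assumes G: "classG \<phi>" and t0: "1 < t0" and Q: "1 \<le> Q"
    and step: "\<forall>s. 0 < s \<and> s \<le> 1 / t0 \<longrightarrow> \<phi> (s * t0) \<le> Q * \<phi> s"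
    and st: "0 < s" "s \<le> t" "t \<le> 1"
  shows "\<phi> t \<le> Q * (t / s) powr (ln Q / ln t0) * \<phi> s"
proof -
  define y where "y = t / s"
  have y1: "1 \<le> y" using st by (simp add: y_def)
  define L where "L = ln y / ln t0"
  have L0: "0 \<le> L" using y1 t0 by (simp add: L_def)
  define n where "n = nat \<lceil>L\<rceil>"
  have nL: "L \<le> real n" "real n \<le> L + 1" using L0 by (auto simp: n_def)
  have "y = t0 powr L" using t0 y1 by (simp add: L_def powr_def)
  also have "\<dots> \<le> t0 powr (real n)" using nL t0 by (intro powr_mono) auto
  also have "\<dots> = t0 ^ n" using t0 by (simp add: powr_realpow)
  finally have "t \<le> t0 ^ n * s" using st by (simp add: y_def field_simps)
  then have 1: "\<phi> t \<le> Q ^ n * \<phi> s" by (rule pow_n[OF G t0 Q step st])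
  have "Q ^ n = Q powr (real n)" using Q by (simp add: powr_realpow)
  also have "\<dots> \<le> Q powr (L + 1)" using nL Q by (intro powr_mono) auto
  also have "\<dots> = Q * Q powr L" using Q by (simp add: powr_add)
  also have "Q powr L = y powr (ln Q / ln t0)" using Q y1 t0
    by (simp add: powr_def L_def)
  finally have "Q ^ n \<le> Q * y powr (ln Q / ln t0)" .
  moreover have "\<phi> s > 0" using G_pos[OF G, of s] st by auto
  ultimately have "Q ^ n * \<phi> s \<le> Q * y powr (ln Q / ln t0) * \<phi> s" by simp
  then show ?thesis using 1 by (simp add: y_def)
qed



lemma meas01_sets:
  assumes "meas01 x"
  shows "{s \<in> {0..1}. c < ennreal \<bar>x s\<bar>} \<in> sets lebesgue"
proof -
  have [measurable]: "x \<in> borel_measurable (restrict_space lebesgue {0..1})"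
    using assms by (simp add: meas01_def)
  have "{s \<in> space (restrict_space lebesgue {0..1}). c < ennreal \<bar>x s\<bar>} \<in> sets (restrict_space lebesgue {0..1})"
    by measurable
  then show ?thesis by (simp add: sets_restrict_space_iff)
qed

lemma rearr_antimono: "0 < t1 \<Longrightarrow> t1 \<le> t2 \<Longrightarrow> rearr x t2 \<le> rearr x t1"
  unfolding rearr_def
  by (auto intro!: Inf_superset_mono simp: order_less_le_trans)

lemma rearr_0_ge: "0 < t \<Longrightarrow> rearr x t \<le> rearr x 0"
  unfolding rearr_def by (auto intro!: Inf_superset_mono)

lemma rearr_upper: "0 < t \<Longrightarrow> distr_fun x r < ennreal t \<Longrightarrow> rearr x t \<le> r"
  unfolding rearr_def by (auto intro!: Inf_lower)

lemma rearr_lower: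
  assumes "0 < t" "\<And>r. r < R \<Longrightarrow> ennreal t \<le> distr_fun x r"
  shows "R \<le> rearr x t"
  unfolding rearr_def using assms
  by (auto intro!: Inf_greatest) (meson not_le)

lemma marc_ge:
  assumes "0 < u" "u \<le> 1"
  shows "ennreal (1 / tilde \<phi> u) * (\<integral>\<^sup>+ s\<in>{0..u}. rearr x s \<partial>lborel) \<le> marc_norm \<phi> x"
  unfolding marc_norm_def using assms by (intro SUP_upper) auto

lemma marc_pt:
  assumes G: "classG \<phi>" and u: "0 < u" "u \<le> 1"
  shows "rearr x u * ennreal (\<phi> u) \<le> marc_norm \<phi> x"
proof -
  have "(\<integral>\<^sup>+ s. rearr x u * indicator {0..u} s \<partial>lborel) \<le> (\<integral>\<^sup>+ s\<in>{0..u}. rearr x s \<partial>lborel)"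
  proof (rule nn_integral_mono)
    fix s show "rearr x u * indicator {0..u} s \<le> rearr x s * indicator {0..u} s"
    proof (cases "s \<in> {0..u}")
      case True
      then show ?thesis
      proof (cases "s = 0")
        case True then show ?thesis using rearr_0_ge[OF u(1)] by (simp add: indicator_def)
      next
        case False then show ?thesis using \<open>s \<in> {0..u}\<close> rearr_antimono[of s u x] by (simp add: indicator_def)
      qed
    qed simp
  qed
  also have "(\<integral>\<^sup>+ s. rearr x u * indicator {0..u} s \<partial>lborel) = rearr x u * ennreal u"
    using u by (simp add: nn_integral_cmult_indicator)
  finally have 1: "rearr x u * ennreal u \<le> (\<integral>\<^sup>+ s\<in>{0..u}. rearr x s \<partial>lborel)" .
  have pu: "\<phi> u > 0" using G_pos[OF G u] .
  have e1: "1 / tilde \<phi> u * u = \<phi> u" using pu u by (simp add: tilde_def)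
  have "ennreal (1 / tilde \<phi> u) * ennreal u = ennreal (1 / tilde \<phi> u * u)"
    using u by (intro ennreal_mult''[symmetric]) simp
  then have e2: "ennreal (1 / tilde \<phi> u) * ennreal u = ennreal (\<phi> u)" using e1 by simp
  have "rearr x u * ennreal (\<phi> u) = ennreal (1 / tilde \<phi> u) * (rearr x u * ennreal u)"
    using e2 by (metis mult.commute mult.left_commute)
  also have "\<dots> \<le> ennreal (1 / tilde \<phi> u) * (\<integral>\<^sup>+ s\<in>{0..u}. rearr x s \<partial>lborel)"
    by (intro mult_left_mono 1) simp
  also have "\<dots> \<le> marc_norm \<phi> x" by (rule marc_ge[OF u])
  finally show ?thesis .
qed

lemma marc_pt2:
  assumes G: "classG \<phi>" and u: "0 < u" "u \<le> 1"
  shows "rearr x u \<le> marc_norm \<phi> x * ennreal (1 / \<phi> u)"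
proof -
  have pu: "\<phi> u > 0" using G_pos[OF G u] .
  have "rearr x u = rearr x u * ennreal (\<phi> u) * ennreal (1 / \<phi> u)"
    using pu by (simp add: mult.assoc ennreal_mult'[symmetric])
  also have "\<dots> \<le> marc_norm \<phi> x * ennreal (1 / \<phi> u)"
    by (intro mult_right_mono marc_pt[OF G u]) simp
  finally show ?thesis .
qed

lemma distr_fun_0: "distr_fun x 0 = emeasure lebesgue {s \<in> {0..1}. x s \<noteq> 0}"
  unfolding distr_fun_def by simp

lemma distr_le1: "distr_fun x r \<le> 1"
proof -
  have "distr_fun x r \<le> emeasure lebesgue {0..(1::real)}"
    unfolding distr_fun_def by (rule emeasure_mono) auto
  then show ?thesis by simp
qed



lemma psi_to_0:
  assumes G: "classG \<phi>" and H: "classG \<psi>"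
    and lim: "((\<lambda>t. \<psi> t / \<phi> t) \<longlongrightarrow> 0) (at_right 0)"
  shows "(\<psi> \<longlongrightarrow> 0) (at_right 0)"
proof (rule tendsto_sandwich[where f = "\<lambda>_. 0" and h = "\<lambda>t. \<psi> t / \<phi> t * \<phi> 1"])
  have ev: "eventually (\<lambda>t. 0 < t \<and> t < 1) (at_right (0::real))"
    unfolding eventually_at_right_field by (intro exI[of _ 1]) auto
  show "eventually (\<lambda>t. 0 \<le> \<psi> t) (at_right 0)"
    using ev by eventually_elim (use G_pos[OF H] in \<open>auto intro: less_imp_le\<close>)
  show "eventually (\<lambda>t. \<psi> t \<le> \<psi> t / \<phi> t * \<phi> 1) (at_right 0)"
    using ev
  proof eventually_elim
    case (elim t)
    have p: "\<phi> t > 0" "\<psi> t > 0" using G_pos[OF G, of t] G_pos[OF H, of t] elim by auto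
    have "\<phi> t \<le> \<phi> 1" using G_mono[OF G, of t 1] elim by auto
    then have "\<psi> t / \<phi> t * \<phi> t \<le> \<psi> t / \<phi> t * \<phi> 1" using p by (intro mult_left_mono) auto
    then show ?case using p by simp
  qed
  show "((\<lambda>t. 0) \<longlongrightarrow> (0::real)) (at_right 0)" by simp
  show "((\<lambda>t. \<psi> t / \<phi> t * \<phi> 1) \<longlongrightarrow> 0) (at_right 0)"
    using tendsto_mult_right[OF lim, of "\<phi> 1"] by simp
qed

lemma F_vals:
  assumes G: "classG \<phi>" and H: "classG \<psi>"
    and lim: "((\<lambda>t. \<psi> t / \<phi> t) \<longlongrightarrow> 0) (at_right 0)"
  shows "stieltjes_fun \<psi> 0 = 0"
  using tendsto_Lim[OF _ psi_to_0[OF G H lim]] by (simp add: stieltjes_fun_def)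

lemma F_mono:
  assumes G: "classG \<phi>" and H: "classG \<psi>"
    and lim: "((\<lambda>t. \<psi> t / \<phi> t) \<longlongrightarrow> 0) (at_right 0)"
    and "x \<le> y"
  shows "stieltjes_fun \<psi> x \<le> stieltjes_fun \<psi> y"
proof -
  have F0: "stieltjes_fun \<psi> 0 = 0" by (rule F_vals[OF G H lim])
  have F: "stieltjes_fun \<psi> t = (if t < 0 then 0 else if t = 0 then 0 else if t \<le> 1 then \<psi> t else \<psi> 1)" for t
    using F0 by (auto simp: stieltjes_fun_def)
  have p: "\<And>t. 0 < t \<Longrightarrow> t \<le> 1 \<Longrightarrow> \<psi> t > 0" using G_pos[OF H] by auto
  have m: "\<And>s t. 0 < s \<Longrightarrow> s \<le> t \<Longrightarrow> t \<le> 1 \<Longrightarrow> \<psi> s \<le> \<psi> t" using G_mono[OF H] by auto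
  show ?thesis unfolding F using assms(4) p m
    by (auto intro: less_imp_le)
qed

lemma F_rc:
  assumes G: "classG \<phi>" and H: "classG \<psi>"
    and lim: "((\<lambda>t. \<psi> t / \<phi> t) \<longlongrightarrow> 0) (at_right 0)"
  shows "continuous (at_right a) (stieltjes_fun \<psi>)"
proof -
  have F0: "stieltjes_fun \<psi> 0 = 0" by (rule F_vals[OF G H lim])
  have F: "stieltjes_fun \<psi> t = (if t < 0 then 0 else if t = 0 then 0 else if t \<le> 1 then \<psi> t else \<psi> 1)" for t
    using F0 by (auto simp: stieltjes_fun_def)
  let ?F = "stieltjes_fun \<psi>"
  show ?thesis unfolding continuous_within
  proof -
    consider "a < 0" | "a = 0" | "0 < a" "a < 1" | "1 \<le> a" by linarith
    then show "(?F \<longlongrightarrow> ?F a) (at_right a)"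
    proof cases
      case 1
      have "eventually (\<lambda>y. ?F y = ?F a) (at_right a)"
        unfolding eventually_at_right_field using 1 by (intro exI[of _ 0]) (auto simp: F)
      then show ?thesis by (rule tendsto_eventually)
    next
      case 2
      have "eventually (\<lambda>y. \<psi> y = ?F y) (at_right a)"
        unfolding eventually_at_right_field using 2 by (intro exI[of _ 1]) (auto simp: F)
      moreover have "(\<psi> \<longlongrightarrow> ?F a) (at_right a)" using psi_to_0[OF G H lim] 2 F0 by simp
      ultimately show ?thesis by (rule Lim_transform_eventually[rotated])
    next
      case 3
      have cc: "convex_on {0<..1} (\<lambda>x. - \<psi> x)"
        using H unfolding classG_def concave_on_def by auto
      have cc2: "convex_on {0<..<1} (\<lambda>x. - \<psi> x)"
        by (rule convex_on_subset[OF cc]) auto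
      have "continuous_on {0<..<1} (\<lambda>x. - \<psi> x)"
        by (rule convex_on_continuous[OF _ cc2]) auto
      then have "continuous_on {0<..<1} (\<lambda>x. - (- \<psi> x))" by (rule continuous_on_minus)
      then have "continuous_on {0<..<1} \<psi>" by simp
      then have "isCont \<psi> a" using 3 by (simp add: continuous_on_eq_continuous_at)
      then have "(\<psi> \<longlongrightarrow> \<psi> a) (at_right a)" by (simp add: isCont_def filterlim_at_split)
      moreover have "eventually (\<lambda>y. \<psi> y = ?F y) (at_right a)"
        unfolding eventually_at_right_field using 3 by (intro exI[of _ 1]) (auto simp: F)
      ultimately have "(?F \<longlongrightarrow> \<psi> a) (at_right a)" by (rule Lim_transform_eventually)
      then show ?thesis using 3 by (simp add: F)
    next
      case 4
      have "eventually (\<lambda>y. ?F y = ?F a) (at_right a)"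
        unfolding eventually_at_right_field using 4 by (intro exI[of _ "a+1"]) (auto simp: F)
      then show ?thesis by (rule tendsto_eventually)
    qed
  qed
qed



lemma mu_Ioc:
  assumes G: "classG \<phi>" and H: "classG \<psi>"
    and lim: "((\<lambda>t. \<psi> t / \<phi> t) \<longlongrightarrow> 0) (at_right 0)" and "a \<le> b"
  shows "emeasure (interval_measure (stieltjes_fun \<psi>)) {a<..b} = ennreal (stieltjes_fun \<psi> b - stieltjes_fun \<psi> a)"
  by (rule emeasure_interval_measure_Ioc[OF assms(4)]) (use F_mono[OF G H lim] F_rc[OF G H lim] in auto)

lemma mu_AE_pos:
  assumes G: "classG \<phi>" and H: "classG \<psi>"
    and lim: "((\<lambda>t. \<psi> t / \<phi> t) \<longlongrightarrow> 0) (at_right 0)"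
  shows "AE u in interval_measure (stieltjes_fun \<psi>). 0 < u"
proof -
  let ?M = "interval_measure (stieltjes_fun \<psi>)"
  have F0: "stieltjes_fun \<psi> 0 = 0" by (rule F_vals[OF G H lim])
  have Fneg: "stieltjes_fun \<psi> t = 0" if "t < 0" for t using that by (simp add: stieltjes_fun_def)
  have nn: "{- real n<..0} \<in> null_sets ?M" for n
  proof -
    have "emeasure ?M {- real n<..0} = 0"
    proof (cases "n = 0")
      case True then show ?thesis by simp
    next
      case False
      then have "- real n < 0" by simp
      then show ?thesis using mu_Ioc[OF G H lim, of "- real n" 0] F0 Fneg by simp
    qed
    then show ?thesis by (simp add: null_sets_def)
  qed
  have eq: "{..0::real} = (\<Union>n. {- real n<..0})"
  proof (intro set_eqI iffI)
    fix x :: real assume "x \<in> {..0}"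
    obtain n :: nat where "- x < real n" using reals_Archimedean2 by blast
    then have "- real n < x" by linarith
    then show "x \<in> (\<Union>n. {- real n<..0})" using \<open>x \<in> {..0}\<close> by auto
  qed auto
  have "{..0::real} \<in> null_sets ?M" unfolding eq by (intro null_sets_UN nn)
  then show ?thesis by (rule AE_I') auto
qed

definition xz :: "(real \<Rightarrow> real) \<Rightarrow> real \<Rightarrow> real" where
  "xz \<phi> s = (if 0 < s \<and> s \<le> 1 then 1 / \<phi> s else 0)"

lemma xz_borel:
  assumes G: "classG \<phi>"
  shows "xz \<phi> \<in> borel_measurable borel"
proof -
  define ph where "ph s = (if s \<le> 0 then 0 else if s \<le> 1 then \<phi> s else \<phi> 1)" for s
  have "mono ph"
  proof (rule monoI)
    fix x y :: real assume "x \<le> y"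
    then show "ph x \<le> ph y" unfolding ph_def
      using G_pos[OF G] G_mono[OF G] by (auto intro: less_imp_le)
  qed
  then have [measurable]: "ph \<in> borel_measurable borel" by (rule borel_measurable_mono)
  have m: "(\<lambda>s. if s \<in> {0<..1} then 1 / ph s else 0) \<in> borel_measurable borel" by measurable
  have "(\<lambda>s. if s \<in> {0<..1} then 1 / ph s else 0) = xz \<phi>"
    by (auto simp: xz_def ph_def fun_eq_iff)
  then show ?thesis using m by metis
qed

lemma xz_meas01: "classG \<phi> \<Longrightarrow> meas01 (xz \<phi>)"
  unfolding meas01_def
  by (intro measurable_restrict_space1 measurable_completion) (simp add: xz_borel)

lemma xz_rearr_lower:
  assumes G: "classG \<phi>" and u: "0 < u" "u \<le> 1"
  shows "ennreal (1 / \<phi> u) \<le> rearr (xz \<phi>) u"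
proof (rule rearr_lower[OF u(1)])
  fix r assume r: "r < ennreal (1 / \<phi> u)"
  have "{0<..u} \<subseteq> {s \<in> {0..1}. r < ennreal \<bar>xz \<phi> s\<bar>}"
  proof
    fix s assume s: "s \<in> {0<..u}"
    have ps: "\<phi> s > 0" "\<phi> u > 0" using G_pos[OF G, of s] G_pos[OF G, of u] s u by auto
    have "\<phi> s \<le> \<phi> u" using G_mono[OF G, of s u] s u by auto
    then have "1 / \<phi> u \<le> 1 / \<phi> s" using ps by (simp add: frac_le)
    then have "r < ennreal (1 / \<phi> s)" using r by (meson ennreal_leI order_less_le_trans)
    then show "s \<in> {s \<in> {0..1}. r < ennreal \<bar>xz \<phi> s\<bar>}" using s u ps by (auto simp: xz_def)
  qed
  then have "emeasure lebesgue {0<..u} \<le> distr_fun (xz \<phi>) r"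
    unfolding distr_fun_def by (intro emeasure_mono meas01_sets xz_meas01 G)
  then show "ennreal u \<le> distr_fun (xz \<phi>) r" using u by simp
qed

lemma xz_rearr_upper:
  assumes G: "classG \<phi>" and u: "0 < u" "u \<le> 1"
  shows "rearr (xz \<phi>) u \<le> ennreal (2 / \<phi> u)"
proof -
  have pu: "\<phi> u > 0" "\<phi> (u/2) > 0" using G_pos[OF G, of u] G_pos[OF G, of "u/2"] u by auto
  have "{s \<in> {0..1}. ennreal (1 / \<phi> (u/2)) < ennreal \<bar>xz \<phi> s\<bar>} \<subseteq> {0..u/2}"
  proof
    fix s assume s: "s \<in> {s \<in> {0..1}. ennreal (1 / \<phi> (u/2)) < ennreal \<bar>xz \<phi> s\<bar>}"
    show "s \<in> {0..u/2}"
    proof (rule ccontr)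
      assume ns: "s \<notin> {0..u/2}"
      then have s2: "u/2 < s" "s \<le> 1" using s by auto
      have ps: "\<phi> s > 0" using G_pos[OF G, of s] s2 u by auto
      have "\<phi> (u/2) \<le> \<phi> s" using G_mono[OF G, of "u/2" s] s2 u by auto
      then have "1 / \<phi> s \<le> 1 / \<phi> (u/2)" using ps pu by (simp add: frac_le)
      moreover have "xz \<phi> s = 1 / \<phi> s" using s2 u by (simp add: xz_def)
      ultimately have "ennreal \<bar>xz \<phi> s\<bar> \<le> ennreal (1 / \<phi> (u/2))" using ps
        by (intro ennreal_leI) simp
      then show False using s by (simp add: not_less[symmetric])
    qed
  qed
  then have "distr_fun (xz \<phi>) (ennreal (1 / \<phi> (u/2))) \<le> emeasure lebesgue {0..u/2}"
    unfolding distr_fun_def by (intro emeasure_mono) auto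
  also have "\<dots> < ennreal u" using u by (simp add: ennreal_lessI)
  finally have "rearr (xz \<phi>) u \<le> ennreal (1 / \<phi> (u/2))" by (rule rearr_upper[OF u(1)])
  also have "\<dots> \<le> ennreal (2 / \<phi> u)"
  proof (rule ennreal_leI)
    have "(u/2) * \<phi> u \<le> u * \<phi> (u/2)" by (rule conc_ratio[OF G]) (use u in auto)
    then have "\<phi> u \<le> 2 * \<phi> (u/2)" using u by (simp add: field_simps)
    then show "1 / \<phi> (u/2) \<le> 2 / \<phi> u" using pu by (simp add: field_simps)
  qed
  finally show ?thesis .
qed



lemma xz_marc:
  assumes G: "classG \<phi>" and idx: "upper_dil_index \<phi> < 1"
  shows "marc_norm \<phi> (xz \<phi>) < \<infinity>"
proof -
  obtain t0 Q where t0: "1 < t0" and Q: "1 \<le> Q" "Q < t0"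
    and step: "\<forall>s. 0 < s \<and> s \<le> 1 / t0 \<longrightarrow> \<phi> (s * t0) \<le> Q * \<phi> s"
    using dil_step[OF G idx] by blast
  define p where "p = ln Q / ln t0"
  have lt0: "ln t0 > 0" using t0 by simp
  have p0: "0 \<le> p" using Q lt0 by (simp add: p_def)
  have p1: "p < 1" using Q t0 lt0 by (simp add: p_def)
  define C where "C = 2 * Q / (1 - p)"
  have bound: "ennreal (1 / tilde \<phi> t) * (\<integral>\<^sup>+ s\<in>{0..t}. rearr (xz \<phi>) s \<partial>lborel) \<le> ennreal C"
    if t: "t \<in> {0<..1}" for t
  proof -
    have pt: "\<phi> t > 0" using G_pos[OF G] t by auto
    define A where "A = 2 * Q * t powr p / \<phi> t"
    have A0: "A \<ge> 0" using pt Q by (simp add: A_def)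
    have pw: "rearr (xz \<phi>) s * indicator {0..t} s \<le> ennreal A * (ennreal (s powr (-p)) * indicator {0..t} s)"
      if s0: "s \<noteq> 0" for s
    proof (cases "s \<in> {0..t}")
      case True
      then have s: "0 < s" "s \<le> t" using s0 by auto
      have ps: "\<phi> s > 0" using G_pos[OF G, of s] s t by auto
      have "\<phi> t \<le> Q * (t / s) powr p * \<phi> s"
        unfolding p_def by (rule pow_bound[OF G t0 Q(1) step]) (use s t in auto)
      then have "1 / \<phi> s \<le> Q * (t / s) powr p / \<phi> t" using ps pt by (simp add: field_simps)
      also have "(t / s) powr p = t powr p * s powr (-p)"
        using s t by (simp add: powr_divide powr_minus_divide)
      finally have h: "1 / \<phi> s \<le> Q * (t powr p * s powr (-p)) / \<phi> t" .
      have eq: "A * s powr (-p) = 2 * (Q * (t powr p * s powr (-p)) / \<phi> t)"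
        using pt by (simp add: A_def field_simps)
      have "2 * (1 / \<phi> s) \<le> 2 * (Q * (t powr p * s powr (-p)) / \<phi> t)" using h by simp
      then have "2 / \<phi> s \<le> A * s powr (-p)" unfolding eq by simp
      then have "ennreal (2 / \<phi> s) \<le> ennreal (A * s powr (-p))" by (rule ennreal_leI)
      also have "\<dots> = ennreal A * ennreal (s powr (-p))" using A0 by (simp add: ennreal_mult)
      finally have "rearr (xz \<phi>) s \<le> ennreal A * ennreal (s powr (-p))"
        using xz_rearr_upper[OF G, of s] s t by (meson order_trans greaterThanAtMost_iff)
      then show ?thesis using True by simp
    qed simp
    have "(\<integral>\<^sup>+ s\<in>{0..t}. rearr (xz \<phi>) s \<partial>lborel)
        \<le> (\<integral>\<^sup>+ s. ennreal A * (ennreal (s powr (-p)) * indicator {0..t} s) \<partial>lborel)"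
      by (rule nn_integral_mono_AE) (use AE_lborel_singleton[of 0] pw in \<open>auto elim!: AE_mp\<close>)
    also have "\<dots> = ennreal A * (\<integral>\<^sup>+ s. ennreal (s powr (-p)) * indicator {0..t} s \<partial>lborel)"
      by (rule nn_integral_cmult) measurable
    also have "(\<integral>\<^sup>+ s. ennreal (s powr (-p)) * indicator {0..t} s \<partial>lborel) = ennreal (t powr (-p + 1) / (-p + 1))"
      by (rule nn_integral_has_integral_lebesgue'[OF _ has_integral_powr_from_0]) (use p1 t in auto)
    finally have I: "(\<integral>\<^sup>+ s\<in>{0..t}. rearr (xz \<phi>) s \<partial>lborel) \<le> ennreal A * ennreal (t powr (-p + 1) / (-p + 1))" .
    have "ennreal (1 / tilde \<phi> t) * (\<integral>\<^sup>+ s\<in>{0..t}. rearr (xz \<phi>) s \<partial>lborel)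
        \<le> ennreal (1 / tilde \<phi> t) * (ennreal A * ennreal (t powr (-p + 1) / (-p + 1)))"
      by (intro mult_left_mono I) simp
    also have "\<dots> = ennreal (1 / tilde \<phi> t * (A * (t powr (-p + 1) / (-p + 1))))"
    proof -
      have n1: "0 \<le> t powr (-p + 1) / (-p + 1)" using p1 by simp
      have "ennreal A * ennreal (t powr (-p + 1) / (-p + 1)) = ennreal (A * (t powr (-p + 1) / (-p + 1)))"
        by (rule ennreal_mult''[symmetric]) (rule n1)
      moreover have "ennreal (1 / tilde \<phi> t) * ennreal (A * (t powr (-p + 1) / (-p + 1)))
          = ennreal (1 / tilde \<phi> t * (A * (t powr (-p + 1) / (-p + 1))))"
        by (rule ennreal_mult''[symmetric]) (use n1 A0 in \<open>simp only: mult_nonneg_nonneg\<close>)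
      ultimately show ?thesis by simp
    qed
    also have "1 / tilde \<phi> t * (A * (t powr (-p + 1) / (-p + 1))) = C"
    proof -
      have "t powr p * t powr (-p + 1) = t" using t by (simp add: powr_add[symmetric])
      then show ?thesis using t pt p1
        by (simp add: tilde_def A_def C_def field_simps)
    qed
    finally show ?thesis .
  qed
  have "marc_norm \<phi> (xz \<phi>) \<le> ennreal C"
    unfolding marc_norm_def by (rule SUP_least) (rule bound)
  then show ?thesis by (simp add: order_le_less_trans)
qed



definition gfun :: "(real \<Rightarrow> real) \<Rightarrow> real \<Rightarrow> real \<Rightarrow> ennreal" where
  "gfun \<phi> m u = indicator {0<..m} u * ennreal (xz \<phi> u)"

lemma gfun_meas: "classG \<phi> \<Longrightarrow> gfun \<phi> m \<in> borel_measurable (interval_measure F)"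
proof -
  assume G: "classG \<phi>"
  have [measurable]: "xz \<phi> \<in> borel_measurable borel" by (rule xz_borel[OF G])
  have "gfun \<phi> m \<in> borel_measurable borel" unfolding gfun_def[abs_def] by measurable
  then show ?thesis by (simp add: measurable_cong_sets[OF sets_interval_measure refl])
qed

lemma gfun1_fin:
  assumes G: "classG \<phi>" and H: "classG \<psi>" and inc: "\<forall>x. in_marc \<phi> x \<longrightarrow> in_lorentz \<psi> x"
    and idx: "upper_dil_index \<phi> < 1"
  shows "(\<integral>\<^sup>+ u. gfun \<phi> 1 u \<partial>interval_measure (stieltjes_fun \<psi>)) < \<infinity>"
proof -
  have "in_marc \<phi> (xz \<phi>)" unfolding in_marc_def using xz_meas01[OF G] xz_marc[OF G idx] by simp
  then have L: "lorentz_norm \<psi> (xz \<phi>) < \<infinity>" using inc by (simp add: in_lorentz_def)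
  have "(\<integral>\<^sup>+ u. gfun \<phi> 1 u \<partial>interval_measure (stieltjes_fun \<psi>)) \<le> lorentz_norm \<psi> (xz \<phi>)"
    unfolding lorentz_norm_def
  proof (rule nn_integral_mono)
    fix u show "gfun \<phi> 1 u \<le> rearr (xz \<phi>) u"
    proof (cases "u \<in> {0<..1}")
      case True
      then show ?thesis using xz_rearr_lower[OF G, of u] by (simp add: gfun_def xz_def)
    qed (simp add: gfun_def)
  qed
  then show ?thesis using L by (simp add: order_le_less_trans)
qed

lemma tail:
  assumes G: "classG \<phi>" and H: "classG \<psi>" and inc: "\<forall>x. in_marc \<phi> x \<longrightarrow> in_lorentz \<psi> x"
    and idx: "upper_dil_index \<phi> < 1" and c: "0 < c"
  shows "\<exists>m. 0 < m \<and> m \<le> 1 \<and> (\<integral>\<^sup>+ u. gfun \<phi> m u \<partial>interval_measure (stieltjes_fun \<psi>)) < ennreal c"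
proof -
  let ?M = "interval_measure (stieltjes_fun \<psi>)"
  define f where "f k = gfun \<phi> (1 / Suc k)" for k :: nat
  have gmono: "gfun \<phi> m u \<le> gfun \<phi> m' u" if "m \<le> m'" for m m' u
    using that by (auto simp: gfun_def indicator_def)
  have dec: "decseq f"
    unfolding f_def by (intro decseq_SucI le_funI gmono) (simp add: frac_le)
  have fm: "f i \<in> borel_measurable ?M" for i unfolding f_def by (rule gfun_meas[OF G])
  have ffin: "(\<integral>\<^sup>+ x. f i x \<partial>?M) < \<infinity>" for i
  proof -
    have "(\<integral>\<^sup>+ x. f i x \<partial>?M) \<le> (\<integral>\<^sup>+ x. gfun \<phi> 1 x \<partial>?M)"
      unfolding f_def by (intro nn_integral_mono gmono) simp
    then show ?thesis using gfun1_fin[OF G H inc idx] by (simp add: order_le_less_trans)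
  qed
  have inf0: "(INF i. f i u) = 0" for u
  proof (cases "u > 0")
    case True
    obtain k where k: "inverse (real (Suc k)) < u" using reals_Archimedean[OF True] by blast
    have "f k u = 0" using k by (simp add: f_def gfun_def indicator_def field_simps)
    then have "(INF i. f i u) \<le> 0" by (metis INF_lower UNIV_I)
    then show ?thesis by simp
  next
    case False
    then have "f 0 u = 0" by (simp add: f_def gfun_def)
    then have "(INF i. f i u) \<le> 0" by (metis INF_lower UNIV_I)
    then show ?thesis by simp
  qed
  have "(INF i. integral\<^sup>N ?M (f i)) = (\<integral>\<^sup>+ x. (INF i. f i x) \<partial>?M)"
    by (rule nn_integral_monotone_convergence_INF_decseq[symmetric, OF dec fm ffin])
  also have "\<dots> = 0" by (simp add: inf0)
  finally have "(INF i. integral\<^sup>N ?M (f i)) < ennreal c" using c by simp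
  then obtain k where "integral\<^sup>N ?M (f k) < ennreal c" by (auto simp: INF_less_iff)
  then show ?thesis unfolding f_def by (intro exI[of _ "1 / Suc k"]) auto
qed

lemma lorentz_upper:
  assumes G: "classG \<phi>" and H: "classG \<psi>"
    and lim: "((\<lambda>t. \<psi> t / \<phi> t) \<longlongrightarrow> 0) (at_right 0)"
    and m: "0 < m" "m \<le> 1" and d: "distr_fun x 0 < ennreal m"
  shows "lorentz_norm \<psi> x \<le> marc_norm \<phi> x * (\<integral>\<^sup>+ u. gfun \<phi> m u \<partial>interval_measure (stieltjes_fun \<psi>))"
proof -
  let ?M = "interval_measure (stieltjes_fun \<psi>)"
  have "lorentz_norm \<psi> x \<le> (\<integral>\<^sup>+ u. marc_norm \<phi> x * gfun \<phi> m u \<partial>?M)"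
    unfolding lorentz_norm_def
  proof (rule nn_integral_mono_AE)
    show "AE u in ?M. rearr x u \<le> marc_norm \<phi> x * gfun \<phi> m u"
      using mu_AE_pos[OF G H lim]
    proof (rule AE_mp, intro AE_I2 impI)
      fix u :: real assume u: "0 < u"
      show "rearr x u \<le> marc_norm \<phi> x * gfun \<phi> m u"
      proof (cases "u < m")
        case True
        then have "gfun \<phi> m u = ennreal (1 / \<phi> u)" using u m by (simp add: gfun_def xz_def)
        then show ?thesis using marc_pt2[OF G u, of x] True m by simp
      next
        case False
        then have "distr_fun x 0 < ennreal u" using d by (meson ennreal_leI not_less order_less_le_trans)
        then have "rearr x u \<le> 0" by (rule rearr_upper[OF u])
        then show ?thesis by simp
      qed
    qed
  qed
  also have "\<dots> = marc_norm \<phi> x * (\<integral>\<^sup>+ u. gfun \<phi> m u \<partial>?M)"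
    by (rule nn_integral_cmult) (rule gfun_meas[OF G])
  finally show ?thesis .
qed



lemma supp_sets: "meas01 x \<Longrightarrow> {s \<in> {0..1}. x s \<noteq> 0} \<in> sets lebesgue"
  using meas01_sets[of x 0] by simp

lemma disj_small:
  fixes xs :: "nat \<Rightarrow> real \<Rightarrow> real"
  assumes meas: "\<And>n. meas01 (xs n)"
    and disj: "\<And>n m. n \<noteq> m \<Longrightarrow> disjoint01 (xs n) (xs m)" and e: "0 < e"
  shows "\<exists>n. distr_fun (xs n) 0 < ennreal e"
proof (rule ccontr)
  assume nt: "\<not> ?thesis"
  define S where "S n = {s \<in> {0..1}. xs n s \<noteq> 0}" for n :: nat
  have Ss: "S n \<in> sets lebesgue" for n unfolding S_def by (rule supp_sets[OF meas])
  have big: "ennreal e \<le> emeasure lebesgue (S n)" for n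
    using nt by (auto simp: distr_fun_0 S_def not_less)
  have inter: "S n \<inter> S m \<in> null_sets lebesgue" if "n \<noteq> m" for n m
  proof -
    have "emeasure lebesgue (S n \<inter> S m) = 0"
      using disj[OF that] by (simp add: disjoint01_def S_def Collect_conj_eq[symmetric] conj_assoc)
        (smt (verit) Collect_cong)
    then show ?thesis using Ss by (simp add: null_sets_def)
  qed
  have sum: "emeasure lebesgue (\<Union>n<N. S n) = (\<Sum>n<N. emeasure lebesgue (S n))" for N
  proof (induction N)
    case 0 then show ?case by simp
  next
    case (Suc N)
    have un: "(\<Union>n<Suc N. S n) = (\<Union>n<N. S n) \<union> S N" by (auto simp: lessThan_Suc)
    have "(\<Union>n<N. S n) \<inter> S N = (\<Union>n<N. S n \<inter> S N)" by auto
    also have "\<dots> \<in> null_sets lebesgue" by (intro null_sets.finite_UN) (auto intro: inter)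
    finally have nn: "(\<Union>n<N. S n) \<inter> S N \<in> null_sets lebesgue" .
    have "emeasure lebesgue (\<Union>n<Suc N. S n) = emeasure lebesgue (\<Union>n<N. S n) + emeasure lebesgue (S N)"
      unfolding un by (rule emeasure_Un') (use Ss nn in auto)
    then show ?case using Suc by simp
  qed
  obtain N :: nat where N: "1 / e < real N" using reals_Archimedean2 by blast
  have "ennreal (real N * e) = (\<Sum>n<N. ennreal e)" using e by (simp add: ennreal_mult'' ennreal_of_nat_eq_real_of_nat)
  also have "\<dots> \<le> (\<Sum>n<N. emeasure lebesgue (S n))" by (intro sum_mono big)
  also have "\<dots> = emeasure lebesgue (\<Union>n<N. S n)" by (rule sum[symmetric])
  also have "\<dots> \<le> emeasure lebesgue {0..(1::real)}" by (rule emeasure_mono) (auto simp: S_def)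
  also have "\<dots> = ennreal 1" by simp
  finally have "real N * e \<le> 1" using e by (subst (asm) ennreal_le_iff) auto
  moreover have "1 < real N * e" using N e by (simp add: field_simps)
  ultimately show False by simp
qed

lemma marc_pos:
  assumes G: "classG \<phi>" and meas: "meas01 x" and nz: "nonzero01 x"
  shows "0 < marc_norm \<phi> x"
proof -
  define T where "T k = {s \<in> {0..1}. ennreal (1 / Suc k) < ennreal \<bar>x s\<bar>}" for k :: nat
  have Ts: "T k \<in> sets lebesgue" for k unfolding T_def by (rule meas01_sets[OF meas])
  have "\<exists>k. emeasure lebesgue (T k) \<noteq> 0"
  proof (rule ccontr)
    assume "\<not> ?thesis"
    then have "T k \<in> null_sets lebesgue" for k using Ts by (auto simp: null_sets_def)
    then have "(\<Union>k. T k) \<in> null_sets lebesgue" by (rule null_sets_UN)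
    moreover have "(\<Union>k. T k) = {s \<in> {0..1}. x s \<noteq> 0}"
    proof (intro set_eqI iffI)
      fix s assume "s \<in> {s \<in> {0..1}. x s \<noteq> 0}"
      then have s: "s \<in> {0..1}" "0 < \<bar>x s\<bar>" by auto
      obtain k where "inverse (real (Suc k)) < \<bar>x s\<bar>" using reals_Archimedean[OF s(2)] by blast
      then have "1 / real (Suc k) < \<bar>x s\<bar>" by (simp add: inverse_eq_divide)
      then have "ennreal (1 / Suc k) < ennreal \<bar>x s\<bar>" using s(2) by (intro ennreal_lessI) auto
      then show "s \<in> (\<Union>k. T k)" using s by (auto simp: T_def)
    qed (auto simp: T_def)
    ultimately show False using nz by (simp add: nonzero01_def null_sets_def)
  qed
  then obtain k where k: "emeasure lebesgue (T k) \<noteq> 0" by blast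
  define r0 :: real where "r0 = 1 / Suc k"
  have r0: "0 < r0" by (simp add: r0_def)
  define d where "d = distr_fun x (ennreal r0)"
  have dT: "d = emeasure lebesgue (T k)" by (simp add: d_def distr_fun_def T_def r0_def)
  have d1: "d \<le> 1" unfolding d_def by (rule distr_le1)
  define u where "u = enn2real d"
  have ud: "ennreal u = d" using d1 by (simp add: u_def ennreal_enn2real_if) (metis ennreal_one_less_top leD)
  have u0: "0 < u" using k d1 dT by (simp add: u_def enn2real_positive_iff) (metis ennreal_one_less_top le_less_trans not_gr_zero)
  have u1: "u \<le> 1" using d1 ud by (metis ennreal_le_1)
  have "ennreal r0 \<le> rearr x u"
  proof (rule rearr_lower[OF u0])
    fix r assume r: "r < ennreal r0"
    have "{s \<in> {0..1}. ennreal r0 < ennreal \<bar>x s\<bar>} \<subseteq> {s \<in> {0..1}. r < ennreal \<bar>x s\<bar>}"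
      using r by auto
    then have "distr_fun x (ennreal r0) \<le> distr_fun x r"
      unfolding distr_fun_def by (intro emeasure_mono meas01_sets[OF meas])
    then show "ennreal u \<le> distr_fun x r" using ud d_def by simp
  qed
  then have "ennreal r0 * ennreal (\<phi> u) \<le> rearr x u * ennreal (\<phi> u)" by (rule mult_right_mono) simp
  also have "\<dots> \<le> marc_norm \<phi> x" by (rule marc_pt[OF G u0 u1])
  finally have le: "ennreal r0 * ennreal (\<phi> u) \<le> marc_norm \<phi> x" .
  have pu: "0 < \<phi> u" using G_pos[OF G u0 u1] .
  have "ennreal r0 * ennreal (\<phi> u) = ennreal (r0 * \<phi> u)"
    by (rule ennreal_mult''[symmetric]) (use pu in simp)
  moreover have "0 < r0 * \<phi> u" using r0 pu by simp
  ultimately have "0 < ennreal r0 * ennreal (\<phi> u)" by simp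
  then show ?thesis using le by (simp add: order_less_le_trans)
qed

lemma rearr_zero: "rearr (\<lambda>s. 0) t = 0"
  unfolding rearr_def distr_fun_def by (simp add: bot_ennreal)

lemma marc_zero: "marc_norm \<phi> (\<lambda>s. 0) = 0"
  unfolding marc_norm_def by (simp add: rearr_zero)



theorem theorem4:
  fixes \<phi> \<psi> :: "real \<Rightarrow> real"
  assumes "classG \<phi>" and "classG \<psi>"
    and "((\<lambda>t. \<psi> t / \<phi> t) \<longlongrightarrow> 0) (at_right 0)"
    and "upper_dil_index \<phi> < 1"
    and "\<forall>x. in_marc \<phi> x \<longrightarrow> in_lorentz \<psi> x"
  shows "incl_DSS \<phi> \<psi>"
proof -
  note G = assms(1) and H = assms(2) and lim = assms(3) and idx = assms(4) and inc = assms(5)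
  show ?thesis unfolding incl_DSS_def
  proof
    assume "\<exists>xs :: nat \<Rightarrow> real \<Rightarrow> real.
      (\<forall>n. in_marc \<phi> (xs n) \<and> nonzero01 (xs n)) \<and>
      (\<forall>n m. n \<noteq> m \<longrightarrow> disjoint01 (xs n) (xs m)) \<and>
      incl_iso_on \<phi> \<psi> (closed_span_marc \<phi> xs)"
    then obtain xs :: "nat \<Rightarrow> real \<Rightarrow> real" where
      xm: "\<And>n. in_marc \<phi> (xs n)" and xnz: "\<And>n. nonzero01 (xs n)"
      and xd: "\<And>n m. n \<noteq> m \<Longrightarrow> disjoint01 (xs n) (xs m)"
      and iso: "incl_iso_on \<phi> \<psi> (closed_span_marc \<phi> xs)" by blast
    obtain c where c: "c > 0" and cb: "\<And>y. y \<in> closed_span_marc \<phi> xs \<Longrightarrow>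
        ennreal c * marc_norm \<phi> y \<le> lorentz_norm \<psi> y"
      using iso unfolding incl_iso_on_def by blast
    obtain m where m: "0 < m" "m \<le> 1"
      and gm: "(\<integral>\<^sup>+ u. gfun \<phi> m u \<partial>interval_measure (stieltjes_fun \<psi>)) < ennreal c"
      using tail[OF G H inc idx c] by blast
    have meas: "\<And>n. meas01 (xs n)" using xm by (simp add: in_marc_def)
    obtain n where n: "distr_fun (xs n) 0 < ennreal m"
      using disj_small[of xs, OF meas xd m(1)] by blast
    have span: "xs n \<in> closed_span_marc \<phi> xs"
      unfolding closed_span_marc_def
    proof (intro CollectI conjI allI impI)
      show "in_marc \<phi> (xs n)" by (rule xm)
      fix e :: real assume e: "0 < e"
      have sm: "(\<Sum>i<Suc n. (if i = n then 1 else 0) * xs i s) = xs n s" for s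
      proof -
        have "(\<Sum>i<Suc n. (if i = n then 1 else 0) * xs i s) = (\<Sum>i<Suc n. if i = n then xs i s else 0)"
          by (rule sum.cong) auto
        also have "\<dots> = xs n s" by (subst sum.delta) auto
        finally show ?thesis .
      qed
      have "(\<lambda>s. xs n s - (\<Sum>i<Suc n. (if i = n then 1 else 0) * xs i s)) = (\<lambda>s. 0)"
        by (simp only: sm) simp
      then have lt: "marc_norm \<phi> (\<lambda>s. xs n s - (\<Sum>i<Suc n. (if i = n then 1 else 0) * xs i s)) < ennreal e"
        using e by (simp add: marc_zero)
      show "\<exists>N (a::nat \<Rightarrow> real). marc_norm \<phi> (\<lambda>s. xs n s - (\<Sum>i<N. a i * xs i s)) < ennreal e"
        apply (rule exI[of _ "Suc n"])
        apply (rule exI[of _ "\<lambda>i. if i = n then (1::real) else 0"])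
        using lt by simp
    qed
    let ?K = "marc_norm \<phi> (xs n)"
    have K0: "0 < ?K" by (rule marc_pos[OF G meas[of n] xnz[of n]])
    have Kf: "?K < top" using xm by (simp add: in_marc_def)
    have "lorentz_norm \<psi> (xs n) \<le> ?K * (\<integral>\<^sup>+ u. gfun \<phi> m u \<partial>interval_measure (stieltjes_fun \<psi>))"
      by (rule lorentz_upper[OF G H lim m n])
    also have "\<dots> < ?K * ennreal c" by (rule ennreal_mult_strict_left_mono[OF gm K0 Kf])
    also have "\<dots> = ennreal c * ?K" by (simp add: mult.commute)
    also have "\<dots> \<le> lorentz_norm \<psi> (xs n)" by (rule cb[OF span])
    finally show False by simp
  qed
qed

end
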